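(* Let $C$ be a finite set of candidates, $a\in C$, and $P=(\succ_1,\dots,\succ_n)$ a profile of linear orders over $C$. Let $B$ be the $0/1$ matrix with rows indexed by $b\in C\setminus\{a\}$ and columns indexed by voters $i\in\{1,\dots,n\}$, with $B_{b,i}=1$ iff $b\succ_i a$. (This is the constraint matrix of the program (Young-IP): minimise $\sum_i d_i$ subject to $\sum_{i:\,b\succ_i a}d_i\ge\mathrm{maj}(b,a)+1$ for all $b\ne a$, $d_i\in\{0,1\}$, ignoring the bounds on $d_i$; here $\mathrm{maj}(b,a)=|\{i:b\succ_ia\}|-|\{i:a\succ_ib\}|$.) If $P$ is single-crossing, then $B$ is totally unimodular.
   Context: A profile of linear orders is single-crossing if the voters can be ordered so that for every pair $a,b\in C$, the set of voters $i$ with $a\succ_i b$ forms an interval of this voter ordering. A matrix is totally unimodular if every square submatrix has determinant in $\{-1,0,1\}$. *)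

theory Defs
  imports Main "Jordan_Normal_Form.Determinant"
begin

text \<open>A profile: voters 0..n-1, voter i has strict preference relation P i,
  where (x,y) in P i means x is preferred to y by voter i.\<close>

definition is_profile :: "'c set \<Rightarrow> nat \<Rightarrow> (nat \<Rightarrow> ('c \<times> 'c) set) \<Rightarrow> bool" where
  "is_profile C n P \<longleftrightarrow> (\<forall>i<n. strict_linear_order_on C (P i) \<and> P i \<subseteq> C \<times> C)"

definition single_crossing :: "'c set \<Rightarrow> nat \<Rightarrow> (nat \<Rightarrow> ('c \<times> 'c) set) \<Rightarrow> bool" where
  "single_crossing C n P \<longleftrightarrow>
     (\<exists>\<sigma>. bij_betw \<sigma> {..<n} {..<n} \<and>
        (\<forall>x\<in>C. \<forall>y\<in>C. \<forall>j1 j2 j3. j1 \<le> j2 \<and> j2 \<le> j3 \<and> j3 < n \<and>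
            (x, y) \<in> P (\<sigma> j1) \<and> (x, y) \<in> P (\<sigma> j3) \<longrightarrow> (x, y) \<in> P (\<sigma> j2)))"

definition totally_unimodular :: "'r set \<Rightarrow> 's set \<Rightarrow> ('r \<Rightarrow> 's \<Rightarrow> int) \<Rightarrow> bool" where
  "totally_unimodular R S M \<longleftrightarrow>
     (\<forall>k rr cc. inj_on rr {..<k} \<and> rr ` {..<k} \<subseteq> R \<and> inj_on cc {..<k} \<and> cc ` {..<k} \<subseteq> S \<longrightarrow>
        det (mat k k (\<lambda>(i, j). M (rr i) (cc j))) \<in> {-1, 0, 1})"

definition young_matrix :: "(nat \<Rightarrow> ('c \<times> 'c) set) \<Rightarrow> 'c \<Rightarrow> 'c \<Rightarrow> nat \<Rightarrow> int" where
  "young_matrix P a b i = (if (b, a) \<in> P i then 1 else 0)"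

end

theory Submission
  imports Defs
begin

definition IM :: "nat \<Rightarrow> (nat \<Rightarrow> nat) \<Rightarrow> (nat \<Rightarrow> nat) \<Rightarrow> (nat \<Rightarrow> nat) \<Rightarrow> int mat" where
  "IM k l u p = mat k k (\<lambda>(i,j). if l i \<le> p j \<and> p j \<le> u i then 1 else 0)"

lemma IM_carrier[simp]: "IM k l u p \<in> carrier_mat k k"
  unfolding IM_def by auto

lemma IM_dim[simp]: "dim_row (IM k l u p) = k" "dim_col (IM k l u p) = k"
  unfolding IM_def by auto

lemma IM_index[simp]: "i < k \<Longrightarrow> j < k \<Longrightarrow> IM k l u p $$ (i,j) = (if l i \<le> p j \<and> p j \<le> u i then 1 else 0)"
  unfolding IM_def by auto

lemma IM_det: "inj_on p {..<k} \<Longrightarrow> det (IM k l u p) \<in> {-1,0,1}"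
proof (induction k arbitrary: l u p)
  case 0
  then show ?case by (simp add: IM_def det_def)
next
  case (Suc m)
  define k where "k = Suc m"
  have injp: "inj_on p {..<k}" using Suc.prems k_def by simp
  obtain j0 where j0: "j0 < k" "\<forall>j<k. p j0 \<le> p j"
  proof -
    have "finite (p ` {..<k})" "p ` {..<k} \<noteq> {}" using k_def by auto
    then have "Min (p ` {..<k}) \<in> p ` {..<k}" by (rule Min_in)
    then obtain j0 where "j0 < k" "p j0 = Min (p ` {..<k})" by auto
    moreover have "\<forall>j<k. Min (p ` {..<k}) \<le> p j" by simp
    ultimately show ?thesis using that by auto
  qed
  have main: "\<forall>l. card {i. i<k \<and> l i \<le> p j0 \<and> p j0 \<le> u i} = c \<longrightarrow> det (IM k l u p) \<in> {-1,0,1}" for c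
  proof (induction c rule: less_induct)
    case (less c)
    show ?case
    proof (intro allI impI)
      fix l
      assume cS: "card {i. i<k \<and> l i \<le> p j0 \<and> p j0 \<le> u i} = c"
      define S where "S = {i. i<k \<and> l i \<le> p j0 \<and> p j0 \<le> u i}"
      have finS: "finite S" unfolding S_def by auto
      let ?A = "IM k l u p"
      have lap: "det ?A = (\<Sum>i<k. ?A $$ (i,j0) * cofactor ?A i j0)"
        using laplace_expansion_column[OF IM_carrier j0(1)] by (simp add: lessThan_atLeast0)
      consider "c = 0" | "c = 1" | "c \<ge> 2" by linarith
      then show "det ?A \<in> {-1,0,1}"
      proof cases
        case 1
        then have "S = {}" using cS finS S_def by auto
        then have "\<forall>i<k. ?A $$ (i,j0) = 0" using j0 unfolding S_def by auto
        then show ?thesis using lap by simp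
      next
        case 2
        then obtain i0 where Si0: "S = {i0}" using cS S_def by (auto simp: card_Suc_eq)
        then have i0: "i0 < k" "l i0 \<le> p j0" "p j0 \<le> u i0" unfolding S_def by auto
        have colj0: "\<forall>i<k. ?A $$ (i,j0) = (if i = i0 then 1 else 0)"
          using j0 Si0 unfolding S_def by auto
        have "det ?A = (\<Sum>i<k. (if i = i0 then cofactor ?A i j0 else 0))"
          unfolding lap by (rule sum.cong, auto simp: colj0)
        also have "\<dots> = cofactor ?A i0 j0" using i0 by simp
        finally have d: "det ?A = (-1)^(i0+j0) * det (mat_delete ?A i0 j0)"
          by (simp add: cofactor_def)
        define f where "f = (\<lambda>i'. if i' < i0 then i' else Suc i')"
        define g where "g = (\<lambda>j'. if j' < j0 then j' else Suc j')"
        have md: "mat_delete ?A i0 j0 = IM m (l \<circ> f) (u \<circ> f) (p \<circ> g)"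
          apply (rule eq_matI)
          using i0 j0 k_def by (auto simp: mat_delete_def f_def g_def IM_def)
        have "inj_on (p \<circ> g) {..<m}"
        proof (rule comp_inj_on)
          show "inj_on g {..<m}" unfolding g_def inj_on_def by auto
          show "inj_on p (g ` {..<m})"
            by (rule inj_on_subset[OF injp], auto simp: g_def k_def)
        qed
        then have "det (mat_delete ?A i0 j0) \<in> {-1,0,1}" unfolding md by (rule Suc.IH)
        then show ?thesis unfolding d by (auto simp: minus_one_power_iff)
      next
        case 3
        have cS2: "card S \<ge> 2" using 3 cS S_def by simp
        then have "S \<noteq> {}" by (metis card.empty not_numeral_le_zero)
        then have "Min (u ` S) \<in> u ` S" using finS by auto
        then obtain i0 where i0S: "i0 \<in> S" "u i0 = Min (u ` S)" by auto
        have i0min: "\<forall>i\<in>S. u i0 \<le> u i" using i0S finS by auto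
        have "S - {i0} \<noteq> {}"
        proof
          assume "S - {i0} = {}"
          then have "S \<subseteq> {i0}" by auto
          then have "card S \<le> card {i0}" by (rule card_mono[rotated], simp)
          then show False using cS2 by simp
        qed
        then obtain i1 where i1: "i1 \<in> S" "i1 \<noteq> i0" by auto
        define l' where "l' = l(i1 := Suc (u i0))"
        have i0k: "i0 < k" and i1k: "i1 < k" using i0S i1 unfolding S_def by auto
        have eqA: "IM k l' u p = addrow (-1) i1 i0 ?A"
        proof (rule eq_matI)
          fix i j assume ij: "i < dim_row (addrow (-1) i1 i0 ?A)" "j < dim_col (addrow (-1) i1 i0 ?A)"
          then have ik: "i < k" and jk: "j < k" by (auto simp: mat_addrow_def)
          have pj: "p j0 \<le> p j" using j0 jk by auto
          have ui: "u i0 \<le> u i1" using i0min i1(1) by auto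
          have f0: "l i0 \<le> p j0" "l i1 \<le> p j0" using i0S(1) i1(1) unfolding S_def by auto
          show "IM k l' u p $$ (i, j) = addrow (-1) i1 i0 ?A $$ (i, j)"
            using ik jk ui f0 pj i0k i1k i1(2) unfolding l'_def
            by (auto simp: mat_addrow_def)
        qed (auto simp: mat_addrow_def)
        have "det (IM k l' u p) = det ?A"
          unfolding eqA by (rule det_addrow[OF i0k i1(2) IM_carrier])
        moreover have "{i. i<k \<and> l' i \<le> p j0 \<and> p j0 \<le> u i} = S - {i1}"
          using i0S unfolding S_def l'_def by auto
        then have "card {i. i<k \<and> l' i \<le> p j0 \<and> p j0 \<le> u i} < c"
          using card_Diff1_less[OF finS i1(1)] cS S_def by simp
        ultimately show ?thesis using less by metis
      qed
    qed
  qed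
  then show ?case using k_def by blast
qed

theorem mainTheorem8:
  fixes C :: "'c set" and a :: 'c and n :: nat and P :: "nat \<Rightarrow> ('c \<times> 'c) set"
  assumes "finite C" and "a \<in> C" and "is_profile C n P" and "single_crossing C n P"
  shows "totally_unimodular (C - {a}) {..<n} (young_matrix P a)"
proof -
  obtain \<sigma> where bij: "bij_betw \<sigma> {..<n} {..<n}" and sc:
    "\<forall>x\<in>C. \<forall>y\<in>C. \<forall>j1 j2 j3. j1 \<le> j2 \<and> j2 \<le> j3 \<and> j3 < n \<and>
            (x, y) \<in> P (\<sigma> j1) \<and> (x, y) \<in> P (\<sigma> j3) \<longrightarrow> (x, y) \<in> P (\<sigma> j2)"
    using assms(4) unfolding single_crossing_def
    apply (elim exE conjE) apply (rule that) apply assumption+ done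
  define J where "J b = {t. t < n \<and> (b, a) \<in> P (\<sigma> t)}" for b
  define L where "L b = (if J b = {} then 1 else Min (J b))" for b
  define U where "U b = (if J b = {} then 0 else Max (J b))" for b
  have LU: "(b, a) \<in> P (\<sigma> t) \<longleftrightarrow> L b \<le> t \<and> t \<le> U b" if b: "b \<in> C" and t: "t < n" for b t
  proof (cases "J b = {}")
    case True
    then show ?thesis using t unfolding L_def U_def J_def by auto
  next
    case False
    have fin: "finite (J b)" unfolding J_def by auto
    have mn: "Min (J b) \<in> J b" "Max (J b) \<in> J b" using fin False by auto
    show ?thesis
    proof
      assume "(b, a) \<in> P (\<sigma> t)"
      then have "t \<in> J b" using t unfolding J_def by auto
      then show "L b \<le> t \<and> t \<le> U b" using fin False unfolding L_def U_def by auto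
    next
      assume "L b \<le> t \<and> t \<le> U b"
      then have "Min (J b) \<le> t" "t \<le> Max (J b)" using False unfolding L_def U_def by auto
      moreover have "(b, a) \<in> P (\<sigma> (Min (J b)))" "(b, a) \<in> P (\<sigma> (Max (J b)))" "Max (J b) < n"
        using mn unfolding J_def by auto
      ultimately show "(b, a) \<in> P (\<sigma> t)"
        using sc b assms(2) by metis
    qed
  qed
  define q where "q = the_inv_into {..<n} \<sigma>"
  have q: "\<sigma> (q v) = v" "q v < n" if "v < n" for v
  proof -
    have "v \<in> \<sigma> ` {..<n}" using that bij by (simp add: bij_betw_def)
    moreover have "inj_on \<sigma> {..<n}" using bij by (simp add: bij_betw_def)
    ultimately show "\<sigma> (q v) = v" "q v < n" using bij unfolding q_def bij_betw_def
      using f_the_inv_into_f[of \<sigma> "{..<n}" v] the_inv_into_into[of \<sigma> "{..<n}" v "{..<n}"] by auto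
  qed
  have injq: "inj_on q {..<n}" unfolding q_def
    using bij by (metis bij_betw_def bij_betw_the_inv_into)
  show ?thesis unfolding totally_unimodular_def
  proof (intro allI impI)
    fix k :: nat and rr :: "nat \<Rightarrow> 'c" and cc :: "nat \<Rightarrow> nat"
    assume H: "inj_on rr {..<k} \<and> rr ` {..<k} \<subseteq> C - {a} \<and> inj_on cc {..<k} \<and> cc ` {..<k} \<subseteq> {..<n}"
    have injp: "inj_on (q \<circ> cc) {..<k}"
    proof (rule comp_inj_on)
      show "inj_on cc {..<k}" using H by blast
      show "inj_on q (cc ` {..<k})" using inj_on_subset[OF injq] H by blast
    qed
    have eq: "mat k k (\<lambda>(i, j). young_matrix P a (rr i) (cc j)) = IM k (L \<circ> rr) (U \<circ> rr) (q \<circ> cc)"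
    proof (rule eq_matI)
      fix i j assume "i < dim_row (IM k (L \<circ> rr) (U \<circ> rr) (q \<circ> cc))" "j < dim_col (IM k (L \<circ> rr) (U \<circ> rr) (q \<circ> cc))"
      then have ij: "i < k" "j < k" by auto
      have rc: "rr i \<in> C" "cc j < n" using H ij by auto
      have "(rr i, a) \<in> P (cc j) \<longleftrightarrow> (rr i, a) \<in> P (\<sigma> (q (cc j)))" using q(1)[OF rc(2)] by simp
      also have "\<dots> \<longleftrightarrow> L (rr i) \<le> q (cc j) \<and> q (cc j) \<le> U (rr i)" using LU[OF rc(1) q(2)[OF rc(2)]] .
      finally show "mat k k (\<lambda>(i, j). young_matrix P a (rr i) (cc j)) $$ (i, j) = IM k (L \<circ> rr) (U \<circ> rr) (q \<circ> cc) $$ (i, j)"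
        using ij by (simp add: young_matrix_def)
    qed auto
    show "det (mat k k (\<lambda>(i, j). young_matrix P a (rr i) (cc j))) \<in> {-1, 0, 1}"
      unfolding eq by (rule IM_det[OF injp])
  qed
qed

end
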